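(* Let $f\in S$ be nonzero. Then, inside $\mathrm{Der}_{\mathbb K}(S^h)$, $$D(f^h)\cap S^h\langle\partial_{x_1},\dots,\partial_{x_n}\rangle=D(f)^h.$$
   Context: $\mathbb K$ a field of characteristic zero, $S=\mathbb K[x_1,\dots,x_n]$, $S^h=\mathbb K[x_1,\dots,x_n,h]$ with the standard grading by total degree. For any polynomial ring $R$ over $\mathbb K$, $\mathrm{Der}_{\mathbb K}(R)$ is the free $R$-module on the partial derivatives; for $g\in R$, $e\ge1$, $D(g;e)=\{\delta:\delta(g)\in g^eR\}$, and for nonzero $F=cF_1^{e_1}\cdots F_r^{e_r}$ (pairwise non-associate irreducibles, $c\in\mathbb K^*$), $D(F)=\bigcap_iD(F_i;e_i)$; this defines $D(f)\subseteq\mathrm{Der}_{\mathbb K}(S)$ and $D(f^h)\subseteq\mathrm{Der}_{\mathbb K}(S^h)$ (basis $\partial_{x_1},\dots,\partial_{x_n},\partial_h$). For nonzero $g\in S$ of degree $e$, $g^h=h^e g(x_1/h,\dots,x_n/h)$. For nonzero $\delta=\sum_{i=1}^n a_i\partial_{x_i}\in\mathrm{Der}_{\mathbb K}(S)$ with $e=\max_i\deg a_i$, $\delta^h=\sum_{a_i\neq0}h^{e-\deg a_i}a_i^h\,\partial_{x_i}$. $D(f)^h$ is the $S^h$-submodule of $S^h\langle\partial_{x_1},\dots,\partial_{x_n}\rangle$ generated by $\{\delta^h:\ 0\ne\delta\in D(f)\}$. *)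

theory Defs
  imports "HOL-Library.Poly_Mapping"
begin

(* Polynomials over a field 'k in the variables indexed by nat: a monomial is
  a finitely supported exponent vector (nat \<Rightarrow>\<^sub>0 nat), a polynomial a finitely
  supported coefficient function on monomials.
  For S = K[x_0,...,x_(n-1)] we use N = n; for S^h we use N = Suc n, the
  homogenizing variable h being the variable with index n. *)

type_synonym 'k mpoly = "(nat \<Rightarrow>\<^sub>0 nat) \<Rightarrow>\<^sub>0 'k"

definition polys :: "nat \<Rightarrow> 'k::field mpoly set" where
  "polys N = {p. \<forall>m\<in>Poly_Mapping.keys p. Poly_Mapping.keys m \<subseteq> {..<N}}"

definition var :: "nat \<Rightarrow> 'k::field mpoly" where
  "var i = Poly_Mapping.single (Poly_Mapping.single i 1) 1"

definition dvd_in :: "nat \<Rightarrow> 'k::field mpoly \<Rightarrow> 'k mpoly \<Rightarrow> bool" where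
  "dvd_in N a b \<longleftrightarrow> (\<exists>r\<in>polys N. b = a * r)"

definition unit_in :: "nat \<Rightarrow> 'k::field mpoly \<Rightarrow> bool" where
  "unit_in N u \<longleftrightarrow> u \<in> polys N \<and> (\<exists>v\<in>polys N. u * v = 1)"

definition irreducible_in :: "nat \<Rightarrow> 'k::field mpoly \<Rightarrow> bool" where
  "irreducible_in N p \<longleftrightarrow> p \<in> polys N \<and> p \<noteq> 0 \<and> \<not> unit_in N p \<and>
     (\<forall>a\<in>polys N. \<forall>b\<in>polys N. p = a * b \<longrightarrow> unit_in N a \<or> unit_in N b)"

definition mult_in :: "nat \<Rightarrow> 'k::field mpoly \<Rightarrow> 'k mpoly \<Rightarrow> nat" where
  "mult_in N p F = (GREATEST e. dvd_in N (p ^ e) F)"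

definition mdeg :: "(nat \<Rightarrow>\<^sub>0 nat) \<Rightarrow> nat" where
  "mdeg m = (\<Sum>i\<in>Poly_Mapping.keys m. Poly_Mapping.lookup m i)"

definition tdeg :: "'k::field mpoly \<Rightarrow> nat" where
  "tdeg p = Max (mdeg ` Poly_Mapping.keys p)"

definition pderiv_m :: "nat \<Rightarrow> 'k::field mpoly \<Rightarrow> 'k mpoly" where
  "pderiv_m i p = (\<Sum>m\<in>Poly_Mapping.keys p.
      Poly_Mapping.single (m - Poly_Mapping.single i 1) (of_nat (Poly_Mapping.lookup m i) * Poly_Mapping.lookup p m))"

(* A derivation of the polynomial ring in N variables, \<Sum>_(i<N) a_i \<partial>_(x_i),
  is represented by its coefficient function a; Der N is the free module Der_K. *)

definition Der :: "nat \<Rightarrow> (nat \<Rightarrow> 'k::field mpoly) set" where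
  "Der N = {a. \<forall>i. a i \<in> polys N \<and> (N \<le> i \<longrightarrow> a i = 0)}"

definition der_apply :: "nat \<Rightarrow> (nat \<Rightarrow> 'k::field mpoly) \<Rightarrow> 'k mpoly \<Rightarrow> 'k mpoly" where
  "der_apply N a g = (\<Sum>i<N. a i * pderiv_m i g)"

definition Dge :: "nat \<Rightarrow> 'k::field mpoly \<Rightarrow> nat \<Rightarrow> (nat \<Rightarrow> 'k mpoly) set" where
  "Dge N g e = {a \<in> Der N. dvd_in N (g ^ e) (der_apply N a g)}"

(* D(F) = intersection of D(F_i; e_i) over the irreducible factors F_i of F
  (ranging over all irreducible divisors; associates give the same condition). *)
definition DF :: "nat \<Rightarrow> 'k::field mpoly \<Rightarrow> (nat \<Rightarrow> 'k mpoly) set" where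
  "DF N F = Der N \<inter> (\<Inter>p\<in>{p. irreducible_in N p \<and> dvd_in N p F}. Dge N p (mult_in N p F))"

definition homog :: "nat \<Rightarrow> 'k::field mpoly \<Rightarrow> 'k mpoly" where
  "homog n g = (\<Sum>m\<in>Poly_Mapping.keys g.
      Poly_Mapping.single (m + Poly_Mapping.single n (tdeg g - mdeg m)) (Poly_Mapping.lookup g m))"

definition der_homog :: "nat \<Rightarrow> (nat \<Rightarrow> 'k::field mpoly) \<Rightarrow> (nat \<Rightarrow> 'k mpoly)" where
  "der_homog n a = (let e = Max {tdeg (a i) | i. i < n \<and> a i \<noteq> 0} in
     (\<lambda>i. if a i = 0 then 0 else var n ^ (e - tdeg (a i)) * homog n (a i)))"

inductive_set submod_gen :: "'k::field mpoly set \<Rightarrow> (nat \<Rightarrow> 'k mpoly) set \<Rightarrow> (nat \<Rightarrow> 'k mpoly) set"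
  for R G where
  zero: "(\<lambda>_. 0) \<in> submod_gen R G"
| add: "c \<in> R \<Longrightarrow> v \<in> G \<Longrightarrow> w \<in> submod_gen R G \<Longrightarrow> (\<lambda>i. c * v i + w i) \<in> submod_gen R G"

end

theory Submission
  imports Defs
begin


type_synonym mono = "nat \<Rightarrow>\<^sub>0 nat"

definition G :: "(mono \<Rightarrow> mono) \<Rightarrow> (mono \<Rightarrow> 'k::field) \<Rightarrow> 'k mpoly \<Rightarrow> 'k mpoly" where
  "G \<phi> w p = (\<Sum>m\<in>Poly_Mapping.keys p. Poly_Mapping.single (\<phi> m) (w m * Poly_Mapping.lookup p m))"

lemma G_superset:
  assumes "finite A" "Poly_Mapping.keys p \<subseteq> A"
  shows "G \<phi> w p = (\<Sum>m\<in>A. Poly_Mapping.single (\<phi> m) (w m * Poly_Mapping.lookup p m))"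
  unfolding G_def
  by (rule sum.mono_neutral_left) (auto simp: assms in_keys_iff)

lemma G_add: "G \<phi> w (p + q) = G \<phi> w p + G \<phi> w q"
proof -
  let ?A = "Poly_Mapping.keys p \<union> Poly_Mapping.keys q"
  have "G \<phi> w (p + q) = (\<Sum>m\<in>?A. Poly_Mapping.single (\<phi> m) (w m * Poly_Mapping.lookup (p+q) m))"
    by (rule G_superset) (auto dest: set_mp[OF keys_add])
  also have "\<dots> = (\<Sum>m\<in>?A. Poly_Mapping.single (\<phi> m) (w m * Poly_Mapping.lookup p m))
     + (\<Sum>m\<in>?A. Poly_Mapping.single (\<phi> m) (w m * Poly_Mapping.lookup q m))"
    by (simp add: lookup_add distrib_left single_add sum.distrib)
  also have "\<dots> = G \<phi> w p + G \<phi> w q"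
    by (simp add: G_superset[symmetric])
  finally show ?thesis .
qed

lemma G_zero[simp]: "G \<phi> w 0 = 0"
  by (simp add: G_def)

lemma G_single[simp]: "G \<phi> w (Poly_Mapping.single m c) = Poly_Mapping.single (\<phi> m) (w m * c)"
  by (simp add: G_def)

lemma G_sum: "G \<phi> w (sum f A) = (\<Sum>a\<in>A. G \<phi> w (f a))"
  by (induction A rule: infinite_finite_induct) (simp_all add: G_add)

lemma G_uminus: "G \<phi> w (- p) = - G \<phi> w p"
  by (metis G_add G_zero add_eq_0_iff2 neg_eq_iff_add_eq_0)

lemma G_diff: "G \<phi> w (p - q) = G \<phi> w p - G \<phi> w q"
  by (metis G_add G_uminus diff_conv_add_uminus)

lemma G_lookup:
  "Poly_Mapping.lookup (G \<phi> w p) k = (\<Sum>m\<in>{m\<in>Poly_Mapping.keys p. \<phi> m = k}. w m * Poly_Mapping.lookup p m)"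
proof -
  have "Poly_Mapping.lookup (G \<phi> w p) k = (\<Sum>m\<in>Poly_Mapping.keys p. if \<phi> m = k then w m * Poly_Mapping.lookup p m else 0)"
    by (simp add: G_def lookup_sum lookup_single when_def)
  also have "\<dots> = (\<Sum>m\<in>{m\<in>Poly_Mapping.keys p. \<phi> m = k}. w m * Poly_Mapping.lookup p m)"
    by (simp add: sum.inter_filter)
  finally show ?thesis .
qed

lemma G_lookup_inj:
  assumes "inj_on \<phi> (Poly_Mapping.keys p)" "m \<in> Poly_Mapping.keys p"
  shows "Poly_Mapping.lookup (G \<phi> w p) (\<phi> m) = w m * Poly_Mapping.lookup p m"
proof -
  have "{m'\<in>Poly_Mapping.keys p. \<phi> m' = \<phi> m} = {m}"
    using assms by (auto dest: inj_onD)
  then show ?thesis by (simp add: G_lookup)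
qed

lemma keys_G: "Poly_Mapping.keys (G \<phi> w p) \<subseteq> \<phi> ` {m\<in>Poly_Mapping.keys p. w m \<noteq> 0}"
proof
  fix k assume "k \<in> Poly_Mapping.keys (G \<phi> w p)"
  then have "(\<Sum>m\<in>{m\<in>Poly_Mapping.keys p. \<phi> m = k}. w m * Poly_Mapping.lookup p m) \<noteq> 0"
    by (simp add: G_lookup in_keys_iff)
  then obtain m where "m \<in> Poly_Mapping.keys p" "\<phi> m = k" "w m * Poly_Mapping.lookup p m \<noteq> 0"
    by (metis (mono_tags, lifting) mem_Collect_eq sum.neutral)
  then show "k \<in> \<phi> ` {m\<in>Poly_Mapping.keys p. w m \<noteq> 0}" by auto
qed

lemma G_cong:
  "(\<And>m. m \<in> Poly_Mapping.keys p \<Longrightarrow> \<phi> m = \<psi> m) \<Longrightarrow> (\<And>m. m \<in> Poly_Mapping.keys p \<Longrightarrow> w m = v m)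
   \<Longrightarrow> G \<phi> w p = G \<psi> v p"
  unfolding G_def by (rule sum.cong) auto

lemma G_id: "G (\<lambda>m. m) (\<lambda>_. 1) p = p"
proof (rule poly_mapping_eqI)
  fix k
  show "Poly_Mapping.lookup (G (\<lambda>m. m) (\<lambda>_. 1) p) k = Poly_Mapping.lookup p k"
  proof (cases "k \<in> Poly_Mapping.keys p")
    case True
    then show ?thesis using G_lookup_inj[of "\<lambda>m. m" p k "\<lambda>_. 1"] by simp
  next
    case False
    then have "{m\<in>Poly_Mapping.keys p. m = k} = {}" by auto
    then show ?thesis using False by (simp add: G_lookup in_keys_iff)
  qed
qed

lemma G_id_cong: "(\<And>m. m \<in> Poly_Mapping.keys p \<Longrightarrow> \<phi> m = m) \<Longrightarrow> (\<And>m. m \<in> Poly_Mapping.keys p \<Longrightarrow> w m = 1)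
   \<Longrightarrow> G \<phi> w p = p"
  using G_cong[of p \<phi> "\<lambda>m. m" w "\<lambda>_. 1"] G_id by metis

lemma expand: "(p::'k::field mpoly) = (\<Sum>m\<in>Poly_Mapping.keys p. Poly_Mapping.single m (Poly_Mapping.lookup p m))"
  using G_id[of p] by (simp add: G_def)

lemma G_comp: "G a w (G b u p) = G (\<lambda>m. a (b m)) (\<lambda>m. w (b m) * u m) p"
  by (simp add: G_def[of b] G_sum mult.assoc) (simp add: G_def mult.assoc)

lemma G_weight_add: "G \<phi> (\<lambda>m. w1 m + w2 m) p = G \<phi> w1 p + G \<phi> w2 p"
  by (simp add: G_def distrib_right single_add sum.distrib)

lemma G_weight_zero: "G \<phi> (\<lambda>_. 0) p = 0"
  by (simp add: G_def)

lemma G_weight_sum: "G \<phi> (\<lambda>m. \<Sum>d\<in>D. w d m) p = (\<Sum>d\<in>D. G \<phi> (w d) p)"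
  by (induction D rule: infinite_finite_induct) (simp_all add: G_weight_zero G_weight_add)

lemma G_mult:
  assumes "\<And>a b. \<phi> (a + b) = \<phi> a + \<phi> b"
  shows "G \<phi> (\<lambda>_. 1) (p * q) = G \<phi> (\<lambda>_. 1) p * G \<phi> (\<lambda>_. 1) q"
proof -
  have "p * q = (\<Sum>a\<in>Poly_Mapping.keys p. Poly_Mapping.single a (Poly_Mapping.lookup p a))
     * (\<Sum>b\<in>Poly_Mapping.keys q. Poly_Mapping.single b (Poly_Mapping.lookup q b))"
    using expand[of p] expand[of q] by simp
  also have "\<dots> = (\<Sum>a\<in>Poly_Mapping.keys p. \<Sum>b\<in>Poly_Mapping.keys q.
      Poly_Mapping.single (a + b) (Poly_Mapping.lookup p a * Poly_Mapping.lookup q b))"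
    by (simp add: sum_product mult_single)
  finally have pq: "p * q = \<dots>" .
  have "G \<phi> (\<lambda>_. 1) (p * q) = (\<Sum>a\<in>Poly_Mapping.keys p. \<Sum>b\<in>Poly_Mapping.keys q.
      Poly_Mapping.single (\<phi> a + \<phi> b) (Poly_Mapping.lookup p a * Poly_Mapping.lookup q b))"
    by (simp add: pq G_sum assms)
  also have "\<dots> = G \<phi> (\<lambda>_. 1) p * G \<phi> (\<lambda>_. 1) q"
    by (simp add: G_def sum_product mult_single)
  finally show ?thesis .
qed

lemma G_shift: "Poly_Mapping.single s c * G \<phi> w p = G (\<lambda>m. s + \<phi> m) (\<lambda>m. c * w m) p"
  by (simp add: G_def sum_distrib_left mult_single mult.assoc)



lemma keys_add_nat: "Poly_Mapping.keys ((a::mono) + b) = Poly_Mapping.keys a \<union> Poly_Mapping.keys b"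
  by (auto simp: in_keys_iff lookup_add)

lemma mdeg_superset: "finite A \<Longrightarrow> Poly_Mapping.keys m \<subseteq> A \<Longrightarrow> mdeg m = (\<Sum>i\<in>A. Poly_Mapping.lookup m i)"
  unfolding mdeg_def by (rule sum.mono_neutral_left) (auto simp: in_keys_iff)

lemma mdeg_add: "mdeg (a + b) = mdeg a + mdeg b"
proof -
  let ?A = "Poly_Mapping.keys a \<union> Poly_Mapping.keys b"
  have "mdeg (a + b) = (\<Sum>i\<in>?A. Poly_Mapping.lookup (a+b) i)"
    by (rule mdeg_superset) (auto simp: keys_add_nat)
  also have "\<dots> = (\<Sum>i\<in>?A. Poly_Mapping.lookup a i) + (\<Sum>i\<in>?A. Poly_Mapping.lookup b i)"
    by (simp add: lookup_add sum.distrib)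
  also have "\<dots> = mdeg a + mdeg b"
    by (simp add: mdeg_superset[symmetric])
  finally show ?thesis .
qed

lemma mdeg_zero[simp]: "mdeg 0 = 0" by (simp add: mdeg_def)

lemma mdeg_single[simp]: "mdeg (Poly_Mapping.single i k) = k"
  by (simp add: mdeg_def)

lemma mdeg_eq_0: "mdeg m = 0 \<Longrightarrow> m = 0"
proof -
  assume "mdeg m = 0"
  then have "\<forall>i\<in>Poly_Mapping.keys m. Poly_Mapping.lookup m i = 0"
    unfolding mdeg_def by simp
  then show "m = 0" by (intro poly_mapping_eqI) (metis in_keys_iff lookup_zero)
qed

lemma mono_split: "(m::mono) = (m - Poly_Mapping.single i k) + Poly_Mapping.single i k" if "k \<le> Poly_Mapping.lookup m i"
proof (rule poly_mapping_eqI)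
  fix j
  show "Poly_Mapping.lookup m j = Poly_Mapping.lookup (m - Poly_Mapping.single i k + Poly_Mapping.single i k) j"
    using that by (cases "i = j") (simp_all add: lookup_add lookup_minus lookup_single_not_eq)
qed

lemma mdeg_minus_single: "Poly_Mapping.lookup m i \<ge> k \<Longrightarrow> mdeg (m - Poly_Mapping.single i k) = mdeg m - k"
proof -
  assume h: "Poly_Mapping.lookup m i \<ge> k"
  have "mdeg m = mdeg (m - Poly_Mapping.single i k) + mdeg (Poly_Mapping.single i k)"
    using mono_split[OF h] mdeg_add by metis
  then show ?thesis by simp
qed

definition hom :: "nat \<Rightarrow> 'k::field mpoly \<Rightarrow> bool" where
  "hom D p \<longleftrightarrow> (\<forall>m\<in>Poly_Mapping.keys p. mdeg m = D)"

definition hc :: "nat \<Rightarrow> 'k::field mpoly \<Rightarrow> 'k mpoly" where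
  "hc d p = G (\<lambda>m. m) (\<lambda>m. if mdeg m = d then 1 else 0) p"

lemma hc_add: "hc d (p + q) = hc d p + hc d q" by (simp add: hc_def G_add)
lemma hc_zero[simp]: "hc d 0 = 0" by (simp add: hc_def)
lemma hc_sum: "hc d (sum f A) = (\<Sum>a\<in>A. hc d (f a))" by (simp add: hc_def G_sum)
lemma hc_uminus: "hc d (- p) = - hc d p" by (simp add: hc_def G_uminus)
lemma hc_diff: "hc d (p - q) = hc d p - hc d q" by (simp add: hc_def G_diff)

lemma lookup_hc: "Poly_Mapping.lookup (hc d p) m = (if mdeg m = d then Poly_Mapping.lookup p m else 0)"
proof (cases "m \<in> Poly_Mapping.keys p")
  case True
  then show ?thesis unfolding hc_def using G_lookup_inj[of "\<lambda>m. m" p m] by simp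
next
  case False
  then have "{m'\<in>Poly_Mapping.keys p. m' = m} = {}" by auto
  then show ?thesis using False by (simp add: hc_def G_lookup in_keys_iff)
qed

lemma keys_hc: "Poly_Mapping.keys (hc d p) = {m\<in>Poly_Mapping.keys p. mdeg m = d}"
  by (auto simp: in_keys_iff lookup_hc split: if_splits)

lemma hom_hc: "hom d (hc d p)" by (simp add: hom_def keys_hc)

lemma hc_hom: "hom D X \<Longrightarrow> hc k X = (if D = k then X else 0)"
proof (rule poly_mapping_eqI)
  fix m assume "hom D X"
  then have "Poly_Mapping.lookup X m \<noteq> 0 \<Longrightarrow> mdeg m = D" by (simp add: hom_def in_keys_iff)
  then show "Poly_Mapping.lookup (hc k X) m = Poly_Mapping.lookup (if D = k then X else 0) m"
    unfolding lookup_hc by (cases "D = k") auto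
qed

lemma hc_outside: "(\<And>m. m \<in> Poly_Mapping.keys p \<Longrightarrow> mdeg m \<noteq> d) \<Longrightarrow> hc d p = 0"
proof (rule poly_mapping_eqI)
  fix m assume a: "\<And>m. m \<in> Poly_Mapping.keys p \<Longrightarrow> mdeg m \<noteq> d"
  show "Poly_Mapping.lookup (hc d p) m = Poly_Mapping.lookup 0 m"
    unfolding lookup_hc using a[of m] by (auto simp: in_keys_iff)
qed

lemma decomp:
  assumes "finite A" "\<And>m. m \<in> Poly_Mapping.keys p \<Longrightarrow> mdeg m \<in> A"
  shows "p = (\<Sum>d\<in>A. hc d p)"
proof (rule poly_mapping_eqI)
  fix m
  show "Poly_Mapping.lookup p m = Poly_Mapping.lookup (\<Sum>d\<in>A. hc d p) m"
  proof (cases "m \<in> Poly_Mapping.keys p")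
    case True
    then have "mdeg m \<in> A" using assms by auto
    then show ?thesis using assms(1)
      by (simp add: lookup_sum lookup_hc)
  next
    case False
    then have "Poly_Mapping.lookup p m = 0" by (simp add: in_keys_iff)
    then show ?thesis by (simp add: lookup_sum lookup_hc if_distrib cong: if_cong)
  qed
qed

lemma hom_zero[simp]: "hom D 0" by (simp add: hom_def)

lemma hom_add: "hom D p \<Longrightarrow> hom D q \<Longrightarrow> hom D (p + q)"
  unfolding hom_def using keys_add[of p q] by (meson Un_iff subsetD)

lemma hom_mult: "hom D p \<Longrightarrow> hom E q \<Longrightarrow> hom (D + E) (p * q)"
  unfolding hom_def
proof
  fix m assume a: "\<forall>m\<in>Poly_Mapping.keys p. mdeg m = D" "\<forall>m\<in>Poly_Mapping.keys q. mdeg m = E"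
    and "m \<in> Poly_Mapping.keys (p * q)"
  then obtain a b where "m = a + b" "a \<in> Poly_Mapping.keys p" "b \<in> Poly_Mapping.keys q"
    using keys_mult[of p q] by blast
  then show "mdeg m = D + E" using a by (simp add: mdeg_add)
qed

lemma hom_power: "hom D p \<Longrightarrow> hom (e * D) (p ^ e)"
proof (induction e)
  case 0 then show ?case by (simp add: hom_def)
next
  case (Suc e) then show ?case using hom_mult[of D p "e * D" "p^e"] by (simp add: add.commute)
qed

lemma hom_single: "hom (mdeg m) (Poly_Mapping.single m c)" by (simp add: hom_def)

lemma hc_mult_hom:
  assumes "hom E Q"
  shows "hc k (p * Q) = (if E \<le> k then hc (k - E) p * Q else 0)"
proof -
  define A where "A = mdeg ` Poly_Mapping.keys p"
  have fA: "finite A" by (simp add: A_def)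
  have "p * Q = (\<Sum>d\<in>A. hc d p) * Q"
    using decomp[of A p] fA by (simp add: A_def)
  then have "hc k (p * Q) = (\<Sum>d\<in>A. hc k (hc d p * Q))"
    by (simp add: sum_distrib_right hc_sum)
  also have "\<dots> = (\<Sum>d\<in>A. if d = k - E \<and> E \<le> k then hc d p * Q else 0)"
  proof (rule sum.cong)
    fix d assume "d \<in> A"
    have "hom (d + E) (hc d p * Q)" using hom_mult[OF hom_hc assms] .
    then show "hc k (hc d p * Q) = (if d = k - E \<and> E \<le> k then hc d p * Q else 0)"
      by (auto simp: hc_hom)
  qed simp
  also have "\<dots> = (if E \<le> k then hc (k - E) p * Q else 0)"
  proof (cases "E \<le> k")
    case True
    show ?thesis
    proof (cases "k - E \<in> A")
      case True
      then show ?thesis using fA \<open>E \<le> k\<close> by (simp add: sum.delta')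
    next
      case False
      then have "hc (k - E) p = 0" by (intro hc_outside) (force simp: A_def)
      then show ?thesis using False by (simp add: sum.delta' fA)
    qed
  qed simp
  finally show ?thesis .
qed

lemma hc_conv: "hc k (p * q) = (\<Sum>j\<in>{..k}. hc (k - j) p * hc j q)"
proof -
  define B where "B = mdeg ` Poly_Mapping.keys q"
  have fB: "finite B" by (simp add: B_def)
  have "p * q = (\<Sum>j\<in>B. p * hc j q)"
    using decomp[of B q] fB by (simp add: B_def sum_distrib_left[symmetric])
  then have "hc k (p * q) = (\<Sum>j\<in>B. hc k (p * hc j q))" by (simp add: hc_sum)
  also have "\<dots> = (\<Sum>j\<in>B. if j \<le> k then hc (k - j) p * hc j q else 0)"
    by (simp add: hc_mult_hom[OF hom_hc])
  also have "\<dots> = (\<Sum>j\<in>B \<inter> {..k}. hc (k - j) p * hc j q)"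
    by (simp add: sum.inter_restrict fB)
  also have "\<dots> = (\<Sum>j\<in>{..k}. hc (k - j) p * hc j q)"
  proof (rule sum.mono_neutral_left)
    show "\<forall>j\<in>{..k} - B \<inter> {..k}. hc (k - j) p * hc j q = 0"
      by (auto intro!: hc_outside simp: B_def)
  qed auto
  finally show ?thesis .
qed



lemma tdeg_ge: "m \<in> Poly_Mapping.keys p \<Longrightarrow> mdeg m \<le> tdeg p"
  unfolding tdeg_def by (rule Max_ge) auto

lemma tdeg_attained: "p \<noteq> 0 \<Longrightarrow> \<exists>m\<in>Poly_Mapping.keys p. mdeg m = tdeg p"
proof -
  assume "p \<noteq> 0"
  then have "Poly_Mapping.keys p \<noteq> {}" by simp
  then have "tdeg p \<in> mdeg ` Poly_Mapping.keys p" unfolding tdeg_def by (intro Max_in) auto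
  then show ?thesis by auto
qed

lemma hc_nz_key: "hc d p \<noteq> 0 \<Longrightarrow> \<exists>m\<in>Poly_Mapping.keys p. mdeg m = d"
proof -
  assume "hc d p \<noteq> 0"
  then obtain m where "m \<in> Poly_Mapping.keys (hc d p)" by (metis keys_eq_empty all_not_in_conv)
  then show ?thesis by (auto simp: keys_hc)
qed

lemma hc_key_nz: "m \<in> Poly_Mapping.keys p \<Longrightarrow> hc (mdeg m) p \<noteq> 0"
proof -
  assume "m \<in> Poly_Mapping.keys p"
  moreover have "Poly_Mapping.lookup (hc (mdeg m) p) m = Poly_Mapping.lookup p m" by (simp add: lookup_hc)
  ultimately show ?thesis by (metis in_keys_iff lookup_zero)
qed

lemma hc_tdeg_nz: "p \<noteq> 0 \<Longrightarrow> hc (tdeg p) p \<noteq> 0"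
  using tdeg_attained hc_key_nz by metis

lemma hc_above: "tdeg p < k \<Longrightarrow> hc k p = 0"
  by (rule hc_outside) (use tdeg_ge in force)

lemma hc_nz_le: "hc k p \<noteq> 0 \<Longrightarrow> k \<le> tdeg p"
  using hc_above not_le by blast

lemma tdeg_eqI: "hc d p \<noteq> 0 \<Longrightarrow> (\<And>k. d < k \<Longrightarrow> hc k p = 0) \<Longrightarrow> tdeg p = d"
proof -
  assume a: "hc d p \<noteq> 0" "\<And>k. d < k \<Longrightarrow> hc k p = 0"
  then have "p \<noteq> 0" by auto
  then have "hc (tdeg p) p \<noteq> 0" by (rule hc_tdeg_nz)
  with a have "\<not> d < tdeg p" by auto
  moreover have "d \<le> tdeg p" using hc_nz_le a by blast
  ultimately show ?thesis by simp
qed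

lemma tdeg_hom: "hom D p \<Longrightarrow> p \<noteq> 0 \<Longrightarrow> tdeg p = D"
  using tdeg_attained unfolding hom_def by metis

definition ldeg :: "'k::field mpoly \<Rightarrow> nat" where
  "ldeg p = Min (mdeg ` Poly_Mapping.keys p)"

lemma ldeg_le: "m \<in> Poly_Mapping.keys p \<Longrightarrow> ldeg p \<le> mdeg m"
  unfolding ldeg_def by (rule Min_le) auto

lemma ldeg_attained: "p \<noteq> 0 \<Longrightarrow> \<exists>m\<in>Poly_Mapping.keys p. mdeg m = ldeg p"
proof -
  assume "p \<noteq> 0"
  then have "Poly_Mapping.keys p \<noteq> {}" by simp
  then have "ldeg p \<in> mdeg ` Poly_Mapping.keys p" unfolding ldeg_def by (intro Min_in) auto
  then show ?thesis by auto
qed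

lemma hc_ldeg_nz: "p \<noteq> 0 \<Longrightarrow> hc (ldeg p) p \<noteq> 0"
  using ldeg_attained hc_key_nz by metis

lemma hc_below: "k < ldeg p \<Longrightarrow> hc k p = 0"
  by (rule hc_outside) (use ldeg_le in force)

lemma ldeg_le_tdeg: "p \<noteq> 0 \<Longrightarrow> ldeg p \<le> tdeg p"
  using ldeg_attained tdeg_ge ldeg_le by (metis)

lemma sum_single_nz:
  assumes "b \<in> A" "finite A" "\<And>j. j \<in> A \<Longrightarrow> j \<noteq> b \<Longrightarrow> f j = 0"
  shows "sum f A = f b"
proof -
  have "sum f A = (\<Sum>j\<in>A. if j = b then f b else 0)"
    by (rule sum.cong) (auto simp: assms)
  also have "\<dots> = f b" using assms by (simp add: sum.delta')
  finally show ?thesis .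
qed

lemma hc_top:
  assumes "p \<noteq> 0" "q \<noteq> 0"
  shows "hc (tdeg p + tdeg q) (p * q) = hc (tdeg p) p * hc (tdeg q) q"
proof -
  have "hc (tdeg p + tdeg q) (p * q) = (\<Sum>j\<in>{..tdeg p + tdeg q}. hc (tdeg p + tdeg q - j) p * hc j q)"
    by (rule hc_conv)
  also have "\<dots> = hc (tdeg p + tdeg q - tdeg q) p * hc (tdeg q) q"
  proof (rule sum_single_nz)
    fix j assume "j \<in> {..tdeg p + tdeg q}" "j \<noteq> tdeg q"
    then show "hc (tdeg p + tdeg q - j) p * hc j q = 0"
      by (cases "j < tdeg q") (auto simp: hc_above)
  qed auto
  finally show ?thesis by simp
qed

lemma hc_top_above:
  assumes "tdeg p + tdeg q < k"
  shows "hc k (p * q) = 0"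
proof -
  have "hc k (p * q) = (\<Sum>j\<in>{..k}. hc (k - j) p * hc j q)" by (rule hc_conv)
  also have "\<dots> = 0"
  proof (rule sum.neutral, intro ballI)
    fix j assume "j \<in> {..k}"
    show "hc (k - j) p * hc j q = 0"
      using assms by (cases "tdeg q < j") (auto simp: hc_above)
  qed
  finally show ?thesis .
qed

lemma tdeg_mult: "p \<noteq> 0 \<Longrightarrow> q \<noteq> 0 \<Longrightarrow> tdeg (p * q) = tdeg p + tdeg q"
  by (rule tdeg_eqI) (simp_all add: hc_top hc_tdeg_nz hc_top_above)

lemma hc_bot:
  assumes "p \<noteq> 0" "q \<noteq> 0"
  shows "hc (ldeg p + ldeg q) (p * q) = hc (ldeg p) p * hc (ldeg q) q"
proof -
  have "hc (ldeg p + ldeg q) (p * q) = (\<Sum>j\<in>{..ldeg p + ldeg q}. hc (ldeg p + ldeg q - j) p * hc j q)"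
    by (rule hc_conv)
  also have "\<dots> = hc (ldeg p + ldeg q - ldeg q) p * hc (ldeg q) q"
  proof (rule sum_single_nz)
    fix j assume "j \<in> {..ldeg p + ldeg q}" "j \<noteq> ldeg q"
    then show "hc (ldeg p + ldeg q - j) p * hc j q = 0"
      by (cases "j < ldeg q") (auto simp: hc_below)
  qed auto
  finally show ?thesis by simp
qed

lemma tdeg_one[simp]: "tdeg (1::'k::field mpoly) = 0"
  by (simp add: tdeg_def)

lemma tdeg_power: "p \<noteq> 0 \<Longrightarrow> tdeg (p ^ e) = e * tdeg p"
  by (induction e) (simp_all add: tdeg_mult)

lemma hom_factor:
  assumes "hom D (p * q)" "p \<noteq> 0" "q \<noteq> 0"
  shows "hom (tdeg p) p"
proof -
  have pq: "p * q \<noteq> 0" using assms by simp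
  have t: "tdeg p + tdeg q = D"
  proof (rule ccontr)
    assume "tdeg p + tdeg q \<noteq> D"
    then have "hc (tdeg p + tdeg q) (p * q) = 0" using hc_hom[OF assms(1)] by simp
    then show False using hc_top[OF assms(2,3)] hc_tdeg_nz[OF assms(2)] hc_tdeg_nz[OF assms(3)] by simp
  qed
  have l: "ldeg p + ldeg q = D"
  proof (rule ccontr)
    assume "ldeg p + ldeg q \<noteq> D"
    then have "hc (ldeg p + ldeg q) (p * q) = 0" using hc_hom[OF assms(1)] by simp
    then show False using hc_bot[OF assms(2,3)] hc_ldeg_nz[OF assms(2)] hc_ldeg_nz[OF assms(3)] by simp
  qed
  have "ldeg p = tdeg p" using t l ldeg_le_tdeg[OF assms(2)] ldeg_le_tdeg[OF assms(3)] by linarith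
  then show ?thesis unfolding hom_def using ldeg_le tdeg_ge by (metis le_antisym)
qed

lemma polys_iff: "p \<in> polys N \<longleftrightarrow> (\<forall>m\<in>Poly_Mapping.keys p. Poly_Mapping.keys m \<subseteq> {..<N})"
  by (simp add: polys_def)

lemma polys_zero[simp]: "0 \<in> polys N" by (simp add: polys_iff)
lemma polys_one[simp]: "1 \<in> polys N" by (simp add: polys_iff)

lemma polys_add: "p \<in> polys N \<Longrightarrow> q \<in> polys N \<Longrightarrow> p + q \<in> polys N"
  unfolding polys_iff using keys_add[of p q] by (meson Un_iff subsetD)

lemma polys_mult: "p \<in> polys N \<Longrightarrow> q \<in> polys N \<Longrightarrow> p * q \<in> polys N"
  unfolding polys_iff
proof
  fix m assume a: "\<forall>m\<in>Poly_Mapping.keys p. Poly_Mapping.keys m \<subseteq> {..<N}"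
     "\<forall>m\<in>Poly_Mapping.keys q. Poly_Mapping.keys m \<subseteq> {..<N}" "m \<in> Poly_Mapping.keys (p * q)"
  then obtain a b where "m = a + b" "a \<in> Poly_Mapping.keys p" "b \<in> Poly_Mapping.keys q"
    using keys_mult[of p q] by blast
  then show "Poly_Mapping.keys m \<subseteq> {..<N}" using a by (simp add: keys_add_nat)
qed

lemma polys_uminus: "p \<in> polys N \<Longrightarrow> - p \<in> polys N"
  unfolding polys_iff by (simp add: keys_minus)

lemma polys_diff: "p \<in> polys N \<Longrightarrow> q \<in> polys N \<Longrightarrow> p - q \<in> polys N"
  using polys_add polys_uminus by (metis diff_conv_add_uminus)

lemma polys_sum: "(\<And>a. a \<in> A \<Longrightarrow> f a \<in> polys N) \<Longrightarrow> sum f A \<in> polys N"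
  by (induction A rule: infinite_finite_induct) (auto intro: polys_add)

lemma polys_power: "p \<in> polys N \<Longrightarrow> p ^ e \<in> polys N"
  by (induction e) (auto intro: polys_mult)

lemma polys_single: "Poly_Mapping.keys m \<subseteq> {..<N} \<Longrightarrow> Poly_Mapping.single m c \<in> polys N"
  by (simp add: polys_iff)

lemma polys_var: "i < N \<Longrightarrow> var i \<in> polys N"
  unfolding var_def by (rule polys_single) simp

lemma polys_G: "(\<And>m. m \<in> Poly_Mapping.keys p \<Longrightarrow> w m \<noteq> 0 \<Longrightarrow> Poly_Mapping.keys (\<phi> m) \<subseteq> {..<N}) \<Longrightarrow> G \<phi> w p \<in> polys N"
  unfolding polys_iff using keys_G[of \<phi> w p] by blast

lemma polys_hc: "p \<in> polys N \<Longrightarrow> hc d p \<in> polys N"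
  unfolding polys_iff by (simp add: keys_hc)

lemma polys_mono: "N \<le> M \<Longrightarrow> p \<in> polys N \<Longrightarrow> p \<in> polys M"
  unfolding polys_iff by force

lemma keys_minus_nat: "Poly_Mapping.keys ((a::mono) - b) \<subseteq> Poly_Mapping.keys a"
  by (auto simp: in_keys_iff lookup_minus)



definition dm :: "nat \<Rightarrow> mono \<Rightarrow> mono" where
  "dm n m = m - Poly_Mapping.single n (Poly_Mapping.lookup m n)"

definition dh :: "nat \<Rightarrow> 'k::field mpoly \<Rightarrow> 'k mpoly" where
  "dh n p = G (dm n) (\<lambda>_. 1) p"

lemma lookup_dm: "Poly_Mapping.lookup (dm n m) i = (if i = n then 0 else Poly_Mapping.lookup m i)"
  by (simp add: dm_def lookup_minus lookup_single_not_eq)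

lemma dm_add: "dm n (a + b) = dm n a + dm n b"
  by (rule poly_mapping_eqI) (simp add: lookup_dm lookup_add)

lemma dm_split: "dm n m + Poly_Mapping.single n (Poly_Mapping.lookup m n) = m"
  unfolding dm_def using mono_split[of "Poly_Mapping.lookup m n" m n] by simp

lemma mdeg_dm: "mdeg (dm n m) + Poly_Mapping.lookup m n = mdeg m"
  using mdeg_add[of "dm n m" "Poly_Mapping.single n (Poly_Mapping.lookup m n)"] dm_split[of n m] by simp

lemma keys_dm: "Poly_Mapping.keys (dm n m) \<subseteq> Poly_Mapping.keys m - {n}"
  by (auto simp: in_keys_iff lookup_dm split: if_splits)

lemma dh_add: "dh n (p + q) = dh n p + dh n q" by (simp add: dh_def G_add)
lemma dh_zero[simp]: "dh n 0 = 0" by (simp add: dh_def)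
lemma dh_sum: "dh n (sum f A) = (\<Sum>a\<in>A. dh n (f a))" by (simp add: dh_def G_sum)
lemma dh_diff: "dh n (p - q) = dh n p - dh n q" by (simp add: dh_def G_diff)
lemma dh_mult: "dh n (p * q) = dh n p * dh n q" unfolding dh_def by (rule G_mult) (rule dm_add)
lemma dh_single: "dh n (Poly_Mapping.single m c) = Poly_Mapping.single (dm n m) c" by (simp add: dh_def)

lemma dm_zero[simp]: "dm n 0 = 0" by (simp add: dm_def)

lemma dh_one[simp]: "dh n (1::'k::field mpoly) = 1"
  using dh_single[of n 0 "1::'k"] by simp

lemma dh_power: "dh n (p ^ e) = dh n p ^ e"
  by (induction e) (simp_all add: dh_mult)

lemma dh_var[simp]: "dh n (var n :: 'k::field mpoly) = 1"
proof -
  have "dm n (Poly_Mapping.single n 1) = 0" by (rule poly_mapping_eqI) (simp add: lookup_dm lookup_single when_def)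
  then show ?thesis by (simp add: var_def dh_single)
qed

lemma dh_polys: "p \<in> polys (Suc n) \<Longrightarrow> dh n p \<in> polys n"
  unfolding dh_def
proof (rule polys_G)
  fix m assume "p \<in> polys (Suc n)" "m \<in> Poly_Mapping.keys p"
  then have "Poly_Mapping.keys m \<subseteq> {..<Suc n}" by (simp add: polys_iff)
  show "Poly_Mapping.keys (dm n m) \<subseteq> {..<n}"
  proof
    fix x assume "x \<in> Poly_Mapping.keys (dm n m)"
    then have "x \<in> Poly_Mapping.keys m" "x \<noteq> n" using keys_dm[of n m] by auto
    then show "x \<in> {..<n}" using \<open>Poly_Mapping.keys m \<subseteq> {..<Suc n}\<close> by (auto simp: less_Suc_eq)
  qed
qed

lemma dm_inj_hom: "hom D P \<Longrightarrow> inj_on (dm n) (Poly_Mapping.keys P)"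
proof (rule inj_onI)
  fix a b assume "hom D P" "a \<in> Poly_Mapping.keys P" "b \<in> Poly_Mapping.keys P" "dm n a = dm n b"
  then have "mdeg a = mdeg b" by (simp add: hom_def)
  then have "Poly_Mapping.lookup a n = Poly_Mapping.lookup b n"
    using mdeg_dm[of n a] mdeg_dm[of n b] \<open>dm n a = dm n b\<close> by simp
  then show "a = b" using dm_split[of n a] dm_split[of n b] \<open>dm n a = dm n b\<close> by metis
qed

lemma lookup_dh_hom: "hom D P \<Longrightarrow> m \<in> Poly_Mapping.keys P \<Longrightarrow> Poly_Mapping.lookup (dh n P) (dm n m) = Poly_Mapping.lookup P m"
proof -
  assume a: "hom D P" "m \<in> Poly_Mapping.keys P"
  show ?thesis unfolding dh_def using G_lookup_inj[OF dm_inj_hom[OF a(1)] a(2)] by simp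
qed

lemma dh_hom_nz: "hom D P \<Longrightarrow> P \<noteq> 0 \<Longrightarrow> dh n P \<noteq> 0"
proof -
  assume a: "hom D P" "P \<noteq> 0"
  then obtain m where m: "m \<in> Poly_Mapping.keys P" by (metis keys_eq_empty all_not_in_conv)
  then have "Poly_Mapping.lookup (dh n P) (dm n m) \<noteq> 0" using lookup_dh_hom[OF a(1) m] by (simp add: in_keys_iff)
  then show ?thesis by auto
qed

lemma keys_dh: "Poly_Mapping.keys (dh n p) \<subseteq> dm n ` Poly_Mapping.keys p"
  unfolding dh_def using keys_G by fastforce

lemma tdeg_dh_le: "hom D P \<Longrightarrow> P \<noteq> 0 \<Longrightarrow> tdeg (dh n P) \<le> D"
proof -
  assume a: "hom D P" "P \<noteq> 0"
  then obtain k where "k \<in> Poly_Mapping.keys (dh n P)" "mdeg k = tdeg (dh n P)"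
    using tdeg_attained dh_hom_nz by metis
  then obtain m where "m \<in> Poly_Mapping.keys P" "k = dm n m" using keys_dh by blast
  then show ?thesis using mdeg_dm[of n m] a(1) \<open>mdeg k = _\<close> by (simp add: hom_def)
qed

lemma dm_key_of_dh_hom: "hom D P \<Longrightarrow> m \<in> Poly_Mapping.keys P \<Longrightarrow> dm n m \<in> Poly_Mapping.keys (dh n P)"
  using lookup_dh_hom by (metis in_keys_iff)

lemma homog_G: "homog n g = G (\<lambda>m. m + Poly_Mapping.single n (tdeg g - mdeg m)) (\<lambda>_. 1) g"
  by (simp add: homog_def G_def)

lemma homog_zero[simp]: "homog n 0 = 0" by (simp add: homog_def)

lemma homog_polys: "g \<in> polys n \<Longrightarrow> homog n g \<in> polys (Suc n)"
  unfolding homog_G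
proof (rule polys_G)
  fix m assume "g \<in> polys n" "m \<in> Poly_Mapping.keys g"
  then have "Poly_Mapping.keys m \<subseteq> {..<n}" by (simp add: polys_iff)
  then show "Poly_Mapping.keys (m + Poly_Mapping.single n (tdeg g - mdeg m)) \<subseteq> {..<Suc n}"
    by (auto simp: keys_add_nat)
qed

lemma homog_hom: "hom (tdeg g) (homog n g)"
  unfolding hom_def homog_G
proof
  fix k assume "k \<in> Poly_Mapping.keys (G (\<lambda>m. m + Poly_Mapping.single n (tdeg g - mdeg m)) (\<lambda>_. 1) g)"
  then obtain m where "m \<in> Poly_Mapping.keys g" "k = m + Poly_Mapping.single n (tdeg g - mdeg m)"
    using keys_G by fastforce
  then show "mdeg k = tdeg g" using tdeg_ge[of m g] by (simp add: mdeg_add)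
qed

lemma polys_lookup_n: "g \<in> polys n \<Longrightarrow> m \<in> Poly_Mapping.keys g \<Longrightarrow> Poly_Mapping.lookup m n = 0"
proof -
  assume "g \<in> polys n" "m \<in> Poly_Mapping.keys g"
  then have "n \<notin> Poly_Mapping.keys m" by (auto simp: polys_iff)
  then show ?thesis by (simp add: in_keys_iff)
qed

lemma dh_homog: "g \<in> polys n \<Longrightarrow> dh n (homog n g) = g"
  unfolding dh_def homog_G G_comp
proof (rule G_id_cong)
  fix m assume "g \<in> polys n" "m \<in> Poly_Mapping.keys g"
  then have "Poly_Mapping.lookup m n = 0" by (rule polys_lookup_n)
  then show "dm n (m + Poly_Mapping.single n (tdeg g - mdeg m)) = m"
    by (intro poly_mapping_eqI) (simp add: lookup_dm lookup_add lookup_single when_def)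
qed simp

lemma homog_nz: "g \<in> polys n \<Longrightarrow> g \<noteq> 0 \<Longrightarrow> homog n g \<noteq> 0"
  using dh_homog by fastforce

lemma tdeg_homog: "g \<in> polys n \<Longrightarrow> g \<noteq> 0 \<Longrightarrow> tdeg (homog n g) = tdeg g"
  using tdeg_hom[OF homog_hom homog_nz] by blast

lemma var_power: "(var n :: 'k::field mpoly) ^ k = Poly_Mapping.single (Poly_Mapping.single n k) 1"
proof (induction k)
  case 0 then show ?case by simp
next
  case (Suc k) then show ?case by (simp add: var_def mult_single single_add[symmetric] add.commute)
qed

lemma char:
  assumes "P \<in> polys (Suc n)" "hom D P" "P \<noteq> 0"
  shows "P = var n ^ (D - tdeg (dh n P)) * homog n (dh n P)"
proof -
  define g where "g = dh n P"
  define T where "T = tdeg g"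
  have TD: "T \<le> D" unfolding T_def g_def using tdeg_dh_le assms by blast
  have "var n ^ (D - T) * homog n g = G (\<lambda>m. Poly_Mapping.single n (D - T) + (m + Poly_Mapping.single n (T - mdeg m))) (\<lambda>_. 1) g"
    unfolding var_power homog_G G_shift T_def by simp
  also have "\<dots> = G (\<lambda>m. Poly_Mapping.single n (D - T) + (dm n m + Poly_Mapping.single n (T - mdeg (dm n m)))) (\<lambda>_. 1) P"
    unfolding g_def dh_def G_comp by simp
  also have "\<dots> = P"
  proof (rule G_id_cong)
    fix m assume m: "m \<in> Poly_Mapping.keys P"
    have "dm n m \<in> Poly_Mapping.keys g" unfolding g_def by (rule dm_key_of_dh_hom[OF assms(2) m])
    then have le: "mdeg (dm n m) \<le> T" unfolding T_def by (rule tdeg_ge)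
    have "mdeg (dm n m) + Poly_Mapping.lookup m n = D" using mdeg_dm[of n m] assms(2) m by (simp add: hom_def)
    then have "D - T + (T - mdeg (dm n m)) = Poly_Mapping.lookup m n" using le TD by linarith
    then have "Poly_Mapping.single n (D - T) + (dm n m + Poly_Mapping.single n (T - mdeg (dm n m)))
        = dm n m + Poly_Mapping.single n (Poly_Mapping.lookup m n)"
      by (metis (no_types, lifting) add.left_commute single_add)
    then show "Poly_Mapping.single n (D - T) + (dm n m + Poly_Mapping.single n (T - mdeg (dm n m))) = m"
      using dm_split by simp
  qed simp
  finally show ?thesis unfolding g_def T_def by simp
qed

lemma var_mult_keys: "k \<in> Poly_Mapping.keys (var n * s) \<Longrightarrow> Poly_Mapping.lookup k n \<ge> 1"
proof -
  assume k: "k \<in> Poly_Mapping.keys (var n * s)"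
  have "var n * s = G (\<lambda>m. Poly_Mapping.single n 1 + m) (\<lambda>m. 1 * 1) s"
    using G_shift[of "Poly_Mapping.single n 1" 1 "\<lambda>m. m" "\<lambda>_. 1" s] by (simp add: G_id var_def)
  then obtain m where "k = Poly_Mapping.single n 1 + m" using k keys_G by fastforce
  then show ?thesis by (simp add: lookup_add)
qed

lemma homog_key0:
  assumes "g \<in> polys n" "g \<noteq> 0"
  shows "\<exists>k\<in>Poly_Mapping.keys (homog n g). Poly_Mapping.lookup k n = 0"
proof -
  obtain m where m: "m \<in> Poly_Mapping.keys g" "mdeg m = tdeg g" using tdeg_attained assms by blast
  let ?\<psi> = "\<lambda>m. m + Poly_Mapping.single n (tdeg g - mdeg m)"
  have inj: "inj_on ?\<psi> (Poly_Mapping.keys g)"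
  proof (rule inj_onI)
    fix a b assume ab: "a \<in> Poly_Mapping.keys g" "b \<in> Poly_Mapping.keys g" "?\<psi> a = ?\<psi> b"
    have "Poly_Mapping.lookup a n = 0" "Poly_Mapping.lookup b n = 0" using ab assms polys_lookup_n by blast+
    then have "dm n (?\<psi> a) = a" "dm n (?\<psi> b) = b"
      by (auto intro!: poly_mapping_eqI simp: lookup_dm lookup_add lookup_single when_def)
    then show "a = b" using ab(3) by metis
  qed
  have "Poly_Mapping.lookup (homog n g) (?\<psi> m) = Poly_Mapping.lookup g m"
    unfolding homog_G using G_lookup_inj[OF inj m(1)] by simp
  moreover have "?\<psi> m = m" using m(2) by simp
  ultimately have "m \<in> Poly_Mapping.keys (homog n g)" using m(1) by (simp add: in_keys_iff)
  moreover have "Poly_Mapping.lookup m n = 0" using assms m polys_lookup_n by blast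
  ultimately show ?thesis by blast
qed

lemma var_not_dvd_homog: "g \<in> polys n \<Longrightarrow> g \<noteq> 0 \<Longrightarrow> homog n g \<noteq> var n * s"
  using homog_key0 var_mult_keys by fastforce



lemma homog_mult:
  assumes "a \<in> polys n" "b \<in> polys n" "a \<noteq> 0" "b \<noteq> 0"
  shows "homog n (a * b) = homog n a * homog n b"
proof -
  let ?P = "homog n a * homog n b"
  have P: "?P \<in> polys (Suc n)" using assms by (simp add: polys_mult homog_polys)
  have hP: "hom (tdeg a + tdeg b) ?P" using hom_mult[OF homog_hom homog_hom] .
  have nz: "?P \<noteq> 0" using homog_nz[OF assms(1,3)] homog_nz[OF assms(2,4)] by simp
  have dP: "dh n ?P = a * b" using assms by (simp add: dh_mult dh_homog)
  have "?P = var n ^ (tdeg a + tdeg b - tdeg (dh n ?P)) * homog n (dh n ?P)"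
    by (rule char[OF P hP nz])
  then show ?thesis using dP assms by (simp add: tdeg_mult)
qed

lemma homog_one[simp]: "homog n (1::'k::field mpoly) = 1"
  by (simp add: homog_def)

lemma homog_power:
  assumes "q \<in> polys n" "q \<noteq> 0"
  shows "homog n (q ^ e) = homog n q ^ e"
proof (induction e)
  case 0 then show ?case by simp
next
  case (Suc e)
  have "homog n (q ^ Suc e) = homog n (q * q ^ e)" by simp
  also have "\<dots> = homog n q * homog n (q ^ e)"
    by (rule homog_mult) (use assms in \<open>auto simp: polys_power\<close>)
  finally show ?case using Suc by simp
qed

lemma const_of_tdeg0:
  assumes "p \<noteq> 0" "tdeg p = 0"
  shows "p = Poly_Mapping.single 0 (Poly_Mapping.lookup p 0)"
proof -
  have k: "Poly_Mapping.keys p \<subseteq> {0}"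
  proof
    fix m assume "m \<in> Poly_Mapping.keys p"
    then have "mdeg m = 0" using tdeg_ge[of m p] assms by simp
    then show "m \<in> {0}" using mdeg_eq_0 by simp
  qed
  have "p = (\<Sum>m\<in>Poly_Mapping.keys p. Poly_Mapping.single m (Poly_Mapping.lookup p m))" by (rule expand)
  also have "\<dots> = (\<Sum>m\<in>{0}. Poly_Mapping.single m (Poly_Mapping.lookup p m))"
    by (rule sum.mono_neutral_left) (use k in \<open>auto simp: in_keys_iff\<close>)
  finally show ?thesis by simp
qed

lemma unit_iff: "unit_in N u \<longleftrightarrow> u \<in> polys N \<and> u \<noteq> 0 \<and> tdeg u = 0"
proof
  assume "unit_in N u"
  then obtain v where uv: "u \<in> polys N" "u * v = 1" by (auto simp: unit_in_def)
  then have "u \<noteq> 0" "v \<noteq> 0" by auto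
  then have "tdeg u + tdeg v = 0" using tdeg_mult[of u v] uv by simp
  then show "u \<in> polys N \<and> u \<noteq> 0 \<and> tdeg u = 0" using uv \<open>u \<noteq> 0\<close> by simp
next
  assume a: "u \<in> polys N \<and> u \<noteq> 0 \<and> tdeg u = 0"
  define c where "c = Poly_Mapping.lookup u 0"
  have u: "u = Poly_Mapping.single 0 c" using const_of_tdeg0 a c_def by blast
  then have "c \<noteq> 0" using a by auto
  have "Poly_Mapping.single 0 (inverse c) \<in> polys N" by (simp add: polys_single)
  moreover have "u * Poly_Mapping.single 0 (inverse c) = 1" using \<open>c \<noteq> 0\<close> u by (simp add: mult_single)
  ultimately show "unit_in N u" using a by (auto simp: unit_in_def)
qed

lemma irr_tdeg: "irreducible_in N p \<Longrightarrow> 1 \<le> tdeg p"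
  unfolding irreducible_in_def using unit_iff by fastforce

lemma dvd_in_trans: "dvd_in N a b \<Longrightarrow> dvd_in N b c \<Longrightarrow> dvd_in N a c"
  unfolding dvd_in_def using polys_mult by (metis mult.assoc)

lemma mult_bound:
  assumes "irreducible_in N p" "F \<noteq> 0" "dvd_in N (p ^ e) F"
  shows "e \<le> tdeg F"
proof -
  obtain r where r: "F = p ^ e * r" using assms(3) by (auto simp: dvd_in_def)
  have p0: "p \<noteq> 0" using assms(1) by (simp add: irreducible_in_def)
  have r0: "r \<noteq> 0" using r assms(2) by auto
  have "tdeg F = e * tdeg p + tdeg r" using r p0 r0 by (simp add: tdeg_mult tdeg_power)
  moreover have "1 \<le> tdeg p" using irr_tdeg assms(1) .
  ultimately show ?thesis
    by (metis le_add1 le_trans mult.right_neutral mult_le_mono2)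
qed

lemma mult_dvd:
  assumes "irreducible_in N p" "F \<in> polys N" "F \<noteq> 0"
  shows "dvd_in N (p ^ mult_in N p F) F"
  unfolding mult_in_def
proof (rule GreatestI_nat)
  show "dvd_in N (p ^ 0) F" using assms(2) by (auto simp: dvd_in_def)
  show "\<And>y. dvd_in N (p ^ y) F \<Longrightarrow> y \<le> tdeg F" using mult_bound assms by blast
qed

lemma mult_ge:
  assumes "irreducible_in N p" "F \<noteq> 0" "dvd_in N (p ^ e) F"
  shows "e \<le> mult_in N p F"
proof -
  have "\<forall>y. dvd_in N (p ^ y) F \<longrightarrow> y \<le> tdeg F" using mult_bound assms(1,2) by blast
  then show ?thesis unfolding mult_in_def using Greatest_le_nat[of "\<lambda>e. dvd_in N (p ^ e) F" e "tdeg F"] assms(3) by blast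
qed

lemma homog_not_var_mult:
  assumes "g \<in> polys n" "g \<noteq> 0" "homog n g = var n ^ k * s" "1 \<le> k"
  shows False
proof -
  have "var n ^ k * s = var n * (var n ^ (k - 1) * s)"
    using assms(4) by (metis Suc_diff_le diff_Suc_1 mult.assoc power_Suc)
  then show False using var_not_dvd_homog[OF assms(1,2)] assms(3) by metis
qed

lemma unit_factor_homog:
  assumes q: "q \<in> polys n" "q \<noteq> 0" and pab: "homog n q = a * b"
    and ab: "a \<in> polys (Suc n)" "b \<in> polys (Suc n)" "a \<noteq> 0" "b \<noteq> 0"
    and u: "unit_in n (dh n a)"
  shows "unit_in (Suc n) a"
proof -
  have ha: "hom (tdeg a) a" using hom_factor[of "tdeg q" a b] homog_hom[of q n] pab ab by metis
  have t0: "tdeg (dh n a) = 0" using u unit_iff by blast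
  have "a = var n ^ (tdeg a - tdeg (dh n a)) * homog n (dh n a)" by (rule char[OF ab(1) ha ab(3)])
  then have a: "a = var n ^ tdeg a * homog n (dh n a)" using t0 by simp
  have "tdeg a = 0"
  proof (rule ccontr)
    assume "tdeg a \<noteq> 0"
    have "homog n q = var n ^ tdeg a * (homog n (dh n a) * b)" using pab a by (metis mult.assoc)
    then show False using homog_not_var_mult[OF q] \<open>tdeg a \<noteq> 0\<close> by fastforce
  qed
  then show ?thesis using unit_iff ab by blast
qed

lemma irr_homog:
  assumes "irreducible_in n q"
  shows "irreducible_in (Suc n) (homog n q)"
proof -
  have q: "q \<in> polys n" "q \<noteq> 0" "\<not> unit_in n q" using assms by (auto simp: irreducible_in_def)
  have P: "homog n q \<in> polys (Suc n)" "homog n q \<noteq> 0" using q homog_polys homog_nz by auto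
  have nu: "\<not> unit_in (Suc n) (homog n q)"
  proof
    assume "unit_in (Suc n) (homog n q)"
    then have "tdeg q = 0" using unit_iff tdeg_homog q by metis
    then show False using q unit_iff by blast
  qed
  have fac: "unit_in (Suc n) a \<or> unit_in (Suc n) b"
    if ab: "a \<in> polys (Suc n)" "b \<in> polys (Suc n)" "homog n q = a * b" for a b
  proof -
    have nz: "a \<noteq> 0" "b \<noteq> 0" using ab P by auto
    have "q = dh n a * dh n b" using ab(3) dh_homog[OF q(1)] dh_mult by metis
    then have "unit_in n (dh n a) \<or> unit_in n (dh n b)"
      using assms ab dh_polys unfolding irreducible_in_def by blast
    then show ?thesis
    proof
      assume "unit_in n (dh n a)"
      then show ?thesis using unit_factor_homog[OF q(1,2) ab(3) ab(1,2) nz] by blast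
    next
      assume "unit_in n (dh n b)"
      then show ?thesis using unit_factor_homog[OF q(1,2) _ ab(2,1) nz(2,1)] ab(3) by (metis mult.commute)
    qed
  qed
  show ?thesis using P nu fac unfolding irreducible_in_def by blast
qed

lemma irr_dh:
  assumes f: "f \<in> polys n" "f \<noteq> 0"
    and p: "irreducible_in (Suc n) p" and d: "dvd_in (Suc n) p (homog n f)"
  shows "p = homog n (dh n p)" "irreducible_in n (dh n p)" "dvd_in n (dh n p) f" "hom (tdeg p) p"
proof -
  obtain r where r: "r \<in> polys (Suc n)" "homog n f = p * r" using d by (auto simp: dvd_in_def)
  have pp: "p \<in> polys (Suc n)" "p \<noteq> 0" "\<not> unit_in (Suc n) p" using p by (auto simp: irreducible_in_def)
  have r0: "r \<noteq> 0" using r homog_nz[OF f] by auto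
  show hp: "hom (tdeg p) p" using hom_factor[of "tdeg f" p r] homog_hom[of f n] r pp r0 by metis
  define q where "q = dh n p"
  have pc: "p = var n ^ (tdeg p - tdeg q) * homog n q" unfolding q_def by (rule char[OF pp(1) hp pp(2)])
  have "tdeg p - tdeg q = 0"
  proof (rule ccontr)
    assume "tdeg p - tdeg q \<noteq> 0"
    have "homog n f = var n ^ (tdeg p - tdeg q) * (homog n q * r)" using r pc by (metis mult.assoc)
    then show False using homog_not_var_mult[OF f] \<open>tdeg p - tdeg q \<noteq> 0\<close> by fastforce
  qed
  then show pq: "p = homog n (dh n p)" using pc q_def by simp
  have q: "q \<in> polys n" "q \<noteq> 0" unfolding q_def using dh_polys pp dh_hom_nz[OF hp pp(2)] by auto
  have nu: "\<not> unit_in n q"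
  proof
    assume "unit_in n q"
    then have "tdeg q = 0" using unit_iff by blast
    then have "tdeg p = 0" using pq tdeg_homog q q_def by metis
    then show False using pp unit_iff by blast
  qed
  have fac: "unit_in n a \<or> unit_in n b" if ab: "a \<in> polys n" "b \<in> polys n" "q = a * b" for a b
  proof -
    have nz: "a \<noteq> 0" "b \<noteq> 0" using ab q by auto
    have "p = homog n a * homog n b" using pq ab homog_mult nz q_def by metis
    then have "unit_in (Suc n) (homog n a) \<or> unit_in (Suc n) (homog n b)"
      using p ab homog_polys unfolding irreducible_in_def by blast
    then show ?thesis using unit_iff tdeg_homog ab nz by metis
  qed
  show "irreducible_in n (dh n p)" using q nu fac unfolding irreducible_in_def q_def by blast
  have "f = dh n p * dh n r" using r dh_homog[OF f(1)] dh_mult by metis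
  then show "dvd_in n (dh n p) f" using dh_polys r by (auto simp: dvd_in_def)
qed



lemma pd_G: "pderiv_m i p = G (\<lambda>m. m - Poly_Mapping.single i 1) (\<lambda>m. of_nat (Poly_Mapping.lookup m i)) p"
  by (simp add: pderiv_m_def G_def)

lemma pd_add: "pderiv_m i (p + q) = pderiv_m i p + pderiv_m i q" by (simp add: pd_G G_add)
lemma pd_zero[simp]: "pderiv_m i 0 = 0" by (simp add: pd_G)

lemma hom_pd:
  fixes p :: "'k::field_char_0 mpoly"
  shows "hom D p \<Longrightarrow> hom (D - 1) (pderiv_m i p)"
  unfolding hom_def
proof
  fix k assume a: "\<forall>m\<in>Poly_Mapping.keys p. mdeg m = D" "k \<in> Poly_Mapping.keys (pderiv_m i p)"
  then obtain m where m: "m \<in> Poly_Mapping.keys p" "(of_nat (Poly_Mapping.lookup m i) :: 'k) \<noteq> 0"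
     "k = m - Poly_Mapping.single i 1"
    using keys_G[of "\<lambda>m. m - Poly_Mapping.single i 1" "\<lambda>m. (of_nat (Poly_Mapping.lookup m i) :: 'k)" p]
    unfolding pd_G by blast
  then have "Poly_Mapping.lookup m i \<ge> 1" by (metis less_one not_le of_nat_0)
  then show "mdeg k = D - 1" using m a mdeg_minus_single by metis
qed

lemma polys_pd: "p \<in> polys N \<Longrightarrow> pderiv_m i p \<in> polys N"
  unfolding pd_G
proof (rule polys_G)
  fix m assume "p \<in> polys N" "m \<in> Poly_Mapping.keys p"
  then show "Poly_Mapping.keys (m - Poly_Mapping.single i 1) \<subseteq> {..<N}"
    using keys_minus_nat[of m] by (auto simp: polys_iff)
qed

lemma dh_pd: "i \<noteq> n \<Longrightarrow> dh n (pderiv_m i P) = pderiv_m i (dh n P)"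
  unfolding dh_def pd_G G_comp
proof (rule G_cong)
  fix m assume "i \<noteq> n"
  show "dm n (m - Poly_Mapping.single i 1) = dm n m - Poly_Mapping.single i 1"
    by (rule poly_mapping_eqI) (simp add: lookup_dm lookup_minus lookup_single when_def)
  show "1 * of_nat (Poly_Mapping.lookup m i) = of_nat (Poly_Mapping.lookup (dm n m) i) * 1"
    using \<open>i \<noteq> n\<close> by (simp add: lookup_dm)
qed

lemma der_apply_lin: "der_apply N (\<lambda>i. c * v i + w i) g = c * der_apply N v g + der_apply N w g"
  by (simp add: der_apply_def distrib_right sum.distrib sum_distrib_left mult.assoc)

lemma der_apply_zero: "der_apply N (\<lambda>_. 0) g = 0"
  by (simp add: der_apply_def)

lemma polys_der_apply: "a \<in> Der N \<Longrightarrow> g \<in> polys N \<Longrightarrow> der_apply N a g \<in> polys N"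
  unfolding der_apply_def Der_def by (auto intro!: polys_sum polys_mult polys_pd)

lemma der_apply_Suc: "a n = 0 \<Longrightarrow> der_apply (Suc n) a g = der_apply n a g"
  by (simp add: der_apply_def)

lemma dh_der: "a n = 0 \<Longrightarrow> dh n (der_apply (Suc n) a P) = der_apply n (\<lambda>i. dh n (a i)) (dh n P)"
  by (simp add: der_apply_Suc der_apply_def dh_sum dh_mult dh_pd)

lemma hom_sum: "(\<And>x. x \<in> A \<Longrightarrow> hom D (f x)) \<Longrightarrow> hom D (sum f A)"
  by (induction A rule: infinite_finite_induct) (auto intro: hom_add)

lemma hc_der:
  fixes g :: "'k::field_char_0 mpoly"
  assumes "hom D g" "1 \<le> D"
  shows "hc (d + D - 1) (der_apply N a g) = der_apply N (\<lambda>i. hc d (a i)) g"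
proof -
  have "hc (d + D - 1) (a i * pderiv_m i g) = hc d (a i) * pderiv_m i g" for i
  proof -
    have "D - 1 \<le> d + D - 1" "d + D - 1 - (D - 1) = d" using assms(2) by arith+
    then show ?thesis using hc_mult_hom[OF hom_pd[OF assms(1)], of "d + D - 1" "a i" i] by simp
  qed
  then show ?thesis by (simp add: der_apply_def hc_sum)
qed

lemma hom_der:
  fixes g :: "'k::field_char_0 mpoly"
  assumes "\<And>i. hom E (a i)" "hom D g" "1 \<le> D"
  shows "hom (E + D - 1) (der_apply N a g)"
proof -
  have "hom (E + (D - 1)) (a i * pderiv_m i g)" for i
    using hom_mult[OF assms(1) hom_pd[OF assms(2)]] .
  then show ?thesis unfolding der_apply_def using assms(3) by (intro hom_sum) (simp add: add.commute)
qed

lemma Der_closed: "c \<in> polys N \<Longrightarrow> v \<in> Der N \<Longrightarrow> w \<in> Der N \<Longrightarrow> (\<lambda>i. c * v i + w i) \<in> Der N"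
  unfolding Der_def by (simp add: polys_add polys_mult)

lemma Der_zero: "(\<lambda>_. 0) \<in> Der N" by (simp add: Der_def)

lemma dvd_in_zero: "dvd_in N a 0"
  unfolding dvd_in_def by (rule bexI[of _ 0]) simp_all

lemma Dge_zero: "(\<lambda>_. 0) \<in> Dge N g e"
  by (simp add: Dge_def Der_zero der_apply_zero dvd_in_zero)

lemma Dge_closed:
  assumes "c \<in> polys N" "v \<in> Dge N g e" "w \<in> Dge N g e"
  shows "(\<lambda>i. c * v i + w i) \<in> Dge N g e"
proof -
  have D: "(\<lambda>i. c * v i + w i) \<in> Der N" using assms(2,3) Der_closed[OF assms(1)] by (simp add: Dge_def)
  obtain r1 where r1: "r1 \<in> polys N" "der_apply N v g = g ^ e * r1" using assms(2) by (auto simp: Dge_def dvd_in_def)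
  obtain r2 where r2: "r2 \<in> polys N" "der_apply N w g = g ^ e * r2" using assms(3) by (auto simp: Dge_def dvd_in_def)
  have "der_apply N (\<lambda>i. c * v i + w i) g = g ^ e * (c * r1 + r2)"
    unfolding der_apply_lin r1 r2 by (simp add: algebra_simps)
  moreover have "c * r1 + r2 \<in> polys N" using assms r1 r2 by (intro polys_add polys_mult)
  ultimately show ?thesis using D unfolding Dge_def dvd_in_def by blast
qed

lemma DF_zero: "(\<lambda>_. 0) \<in> DF N F"
  unfolding DF_def using Der_zero Dge_zero by blast

lemma DF_closed:
  assumes "c \<in> polys N" "v \<in> DF N F" "w \<in> DF N F"
  shows "(\<lambda>i. c * v i + w i) \<in> DF N F"
proof -
  have "v \<in> Der N" "w \<in> Der N" using assms(2,3) unfolding DF_def by auto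
  then have "(\<lambda>i. c * v i + w i) \<in> Der N" using Der_closed[OF assms(1)] by blast
  moreover have "(\<lambda>i. c * v i + w i) \<in> Dge N p (mult_in N p F)" if "irreducible_in N p" "dvd_in N p F" for p
  proof -
    have "v \<in> Dge N p (mult_in N p F)" "w \<in> Dge N p (mult_in N p F)"
      using assms(2,3) that unfolding DF_def by auto
    then show ?thesis by (rule Dge_closed[OF assms(1)])
  qed
  ultimately show ?thesis unfolding DF_def by blast
qed



lemma hom_var_power: "hom k (var n ^ k :: 'k::field mpoly)"
  unfolding var_power hom_def by simp

lemma polys_homog_var: "g \<in> polys n \<Longrightarrow> var n ^ k * homog n g \<in> polys (Suc n)"
  by (intro polys_mult polys_power polys_var homog_polys) auto

definition Emax :: "nat \<Rightarrow> (nat \<Rightarrow> 'k::field mpoly) \<Rightarrow> nat" where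
  "Emax n a = Max {tdeg (a i) | i. i < n \<and> a i \<noteq> 0}"

lemma der_homog_eq: "der_homog n a = (\<lambda>i. if a i = 0 then 0 else var n ^ (Emax n a - tdeg (a i)) * homog n (a i))"
  unfolding der_homog_def Emax_def Let_def by (rule refl)

lemma Emax_ge:
  assumes "i < n" "a i \<noteq> 0"
  shows "tdeg (a i) \<le> Emax n a"
proof -
  have "finite {tdeg (a i) | i. i < n \<and> a i \<noteq> 0}"
    using finite_surj[of "{..<n}" _ "\<lambda>i. tdeg (a i)"] by (rule finite_subset[rotated]) auto
  then show ?thesis unfolding Emax_def by (rule Max_ge) (use assms in auto)
qed

lemma Emax_attained:
  assumes "a \<in> Der n" "a \<noteq> (\<lambda>_. 0)"
  shows "\<exists>j<n. a j \<noteq> 0 \<and> Emax n a = tdeg (a j)"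
proof -
  have fin: "finite {tdeg (a i) | i. i < n \<and> a i \<noteq> 0}"
    using finite_surj[of "{..<n}" _ "\<lambda>i. tdeg (a i)"] by (rule finite_subset[rotated]) auto
  obtain j where "a j \<noteq> 0" using assms(2) by auto
  then have "j < n" using assms(1) unfolding Der_def by (metis (mono_tags, lifting) mem_Collect_eq not_le)
  then have ne: "{tdeg (a i) | i. i < n \<and> a i \<noteq> 0} \<noteq> {}" using \<open>a j \<noteq> 0\<close> by blast
  have "Emax n a \<in> {tdeg (a i) | i. i < n \<and> a i \<noteq> 0}" unfolding Emax_def using Max_in[OF fin ne] .
  then show ?thesis by auto
qed

lemma der_homog_props:
  assumes "a \<in> Der n" "a \<noteq> (\<lambda>_. 0)"
  shows "der_homog n a \<in> Der (Suc n)" "der_homog n a n = 0"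
    "\<And>i. hom (Emax n a) (der_homog n a i)" "\<And>i. dh n (der_homog n a i) = a i"
proof -
  have aP: "a i \<in> polys n" for i using assms(1) by (simp add: Der_def)
  have a0: "n \<le> i \<Longrightarrow> a i = 0" for i using assms(1) by (simp add: Der_def)
  show "der_homog n a \<in> Der (Suc n)" unfolding der_homog_eq Der_def
    by (auto simp: aP a0 polys_homog_var)
  show "der_homog n a n = 0" unfolding der_homog_eq using a0 by simp
  show "hom (Emax n a) (der_homog n a i)" for i
  proof (cases "a i = 0")
    case False
    then have "i < n" using a0 not_le by blast
    then have le: "tdeg (a i) \<le> Emax n a" using Emax_ge False by blast
    have "hom (Emax n a - tdeg (a i) + tdeg (a i)) (var n ^ (Emax n a - tdeg (a i)) * homog n (a i))"
      by (rule hom_mult[OF hom_var_power homog_hom])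
    then show ?thesis using False le unfolding der_homog_eq by simp
  qed (simp add: der_homog_eq)
  show "dh n (der_homog n a i) = a i" for i
    unfolding der_homog_eq using aP by (simp add: dh_mult dh_power dh_homog)
qed



lemma gen_in:
  fixes f :: "'k::field_char_0 mpoly"
  assumes f: "f \<in> polys n" "f \<noteq> 0" and d: "\<delta> \<in> DF n f" "\<delta> \<noteq> (\<lambda>_. 0)"
  shows "der_homog n \<delta> \<in> DF (Suc n) (homog n f)"
proof -
  let ?F = "homog n f"
  let ?\<theta> = "der_homog n \<delta>"
  have dD: "\<delta> \<in> Der n" using d by (simp add: DF_def)
  note props = der_homog_props[OF dD d(2)]
  have F: "?F \<in> polys (Suc n)" "?F \<noteq> 0" using f homog_polys homog_nz by auto
  have "?\<theta> \<in> Dge (Suc n) p (mult_in (Suc n) p ?F)" if p: "irreducible_in (Suc n) p" "dvd_in (Suc n) p ?F" for p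
  proof -
    define q where "q = dh n p"
    note I = irr_dh[OF f p, folded q_def]
    define e where "e = mult_in (Suc n) p ?F"
    have pP: "p \<in> polys (Suc n)" "p \<noteq> 0" using p by (auto simp: irreducible_in_def)
    have qP: "q \<in> polys n" using dh_polys pP q_def by blast
    obtain r where r: "r \<in> polys (Suc n)" "?F = p ^ e * r"
      using mult_dvd[OF p(1) F] unfolding e_def dvd_in_def by blast
    have "f = q ^ e * dh n r" using r dh_homog[OF f(1)] by (simp add: dh_mult dh_power q_def)
    then have "dvd_in n (q ^ e) f" using dh_polys r by (auto simp: dvd_in_def)
    then have ee: "e \<le> mult_in n q f" using mult_ge[OF I(2) f(2)] by blast
    define e' where "e' = mult_in n q f"
    have "\<delta> \<in> Dge n q e'" using d I unfolding DF_def e'_def by blast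
    then obtain s where s: "s \<in> polys n" "der_apply n \<delta> q = q ^ e' * s" by (auto simp: Dge_def dvd_in_def)
    define Gp where "Gp = der_apply (Suc n) ?\<theta> p"
    have dG: "dh n Gp = der_apply n \<delta> q"
      unfolding Gp_def dh_der[of "der_homog n \<delta>" n, OF props(2)] props(4) q_def by simp
    have t1: "1 \<le> tdeg p" using irr_tdeg p(1) by blast
    have hG: "hom (Emax n \<delta> + tdeg p - 1) Gp" unfolding Gp_def by (rule hom_der[OF props(3) I(4) t1])
    have GP: "Gp \<in> polys (Suc n)" unfolding Gp_def by (rule polys_der_apply[OF props(1) pP(1)])
    show ?thesis
    proof (cases "Gp = 0")
      case True
      then show ?thesis using props(1) by (simp add: Dge_def Gp_def dvd_in_zero)
    next
      case False
      have s0: "s \<noteq> 0" using dh_hom_nz[OF hG False] dG s by auto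
      have qe: "q ^ e' \<in> polys n" "q ^ e' \<noteq> 0" using qP I(2) polys_power by (auto simp: irreducible_in_def)
      define k where "k = Emax n \<delta> + tdeg p - 1 - tdeg (dh n Gp)"
      have Gc: "Gp = var n ^ k * homog n (dh n Gp)"
        unfolding k_def by (rule char[OF GP hG False])
      have hh: "homog n (dh n Gp) = p ^ e' * homog n s"
      proof -
        have q0: "q \<noteq> 0" using I(2) by (simp add: irreducible_in_def)
        have "homog n (dh n Gp) = homog n (q ^ e' * s)" using dG s by simp
        also have "\<dots> = homog n (q ^ e') * homog n s" by (rule homog_mult[OF qe(1) s(1) qe(2) s0])
        also have "\<dots> = homog n q ^ e' * homog n s" using homog_power[OF qP q0] by simp
        finally show ?thesis using I(1) by simp
      qed
      have Gq: "Gp = var n ^ k * (p ^ e' * homog n s)"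
        using Gc unfolding hh .
      have pe: "p ^ e' = p ^ e * p ^ (e' - e)" using ee e'_def power_add[of p e "e' - e"] by simp
      have "Gp = p ^ e * (p ^ (e' - e) * var n ^ k * homog n s)"
        using Gq unfolding pe by (simp only: ac_simps)
      moreover have "p ^ (e' - e) * var n ^ k * homog n s \<in> polys (Suc n)"
        using pP s by (intro polys_mult polys_power polys_var homog_polys) auto
      ultimately have "dvd_in (Suc n) (p ^ e) Gp" by (auto simp: dvd_in_def)
      then show ?thesis using props(1) by (simp add: Dge_def Gp_def e_def)
    qed
  qed
  then show ?thesis using props(1) unfolding DF_def by blast
qed



lemma comp_in:
  fixes f :: "'k::field_char_0 mpoly"
  assumes f: "f \<in> polys n" "f \<noteq> 0" and th: "\<theta> \<in> DF (Suc n) (homog n f)"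
  shows "(\<lambda>i. hc d (\<theta> i)) \<in> DF (Suc n) (homog n f)"
proof -
  let ?F = "homog n f"
  let ?t = "\<lambda>i. hc d (\<theta> i)"
  have tD: "\<theta> \<in> Der (Suc n)" using th by (simp add: DF_def)
  have D: "?t \<in> Der (Suc n)" using tD by (simp add: Der_def polys_hc)
  have "?t \<in> Dge (Suc n) p (mult_in (Suc n) p ?F)" if p: "irreducible_in (Suc n) p" "dvd_in (Suc n) p ?F" for p
  proof -
    define e where "e = mult_in (Suc n) p ?F"
    have "\<theta> \<in> Dge (Suc n) p e" using th p unfolding DF_def e_def by blast
    then obtain r where r: "r \<in> polys (Suc n)" "der_apply (Suc n) \<theta> p = p ^ e * r"
      by (auto simp: Dge_def dvd_in_def)
    have hp: "hom (tdeg p) p" using irr_dh(4)[OF f p] .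
    have t1: "1 \<le> tdeg p" using irr_tdeg p(1) by blast
    have "der_apply (Suc n) ?t p = hc (d + tdeg p - 1) (der_apply (Suc n) \<theta> p)"
      using hc_der[OF hp t1] by simp
    also have "\<dots> = hc (d + tdeg p - 1) (r * p ^ e)" using r by (simp add: mult.commute)
    also have "\<dots> = (if e * tdeg p \<le> d + tdeg p - 1 then hc (d + tdeg p - 1 - e * tdeg p) r * p ^ e else 0)"
      by (rule hc_mult_hom[OF hom_power[OF hp]])
    finally have eq: "der_apply (Suc n) ?t p = \<dots>" .
    have "dvd_in (Suc n) (p ^ e) (der_apply (Suc n) ?t p)"
    proof (cases "e * tdeg p \<le> d + tdeg p - 1")
      case True
      then show ?thesis unfolding eq dvd_in_def using polys_hc[OF r(1)] by (auto simp: mult.commute)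
    next
      case False
      then show ?thesis unfolding eq by (simp add: dvd_in_zero)
    qed
    then show ?thesis using D by (simp add: Dge_def e_def)
  qed
  then show ?thesis using D unfolding DF_def by blast
qed

lemma comp_gen:
  fixes f :: "'k::field_char_0 mpoly"
  assumes f: "f \<in> polys n" "f \<noteq> 0" and th: "\<theta> \<in> DF (Suc n) (homog n f)" "\<theta> n = 0"
    and hd: "\<And>i. hom d (\<theta> i)" and nz: "\<theta> \<noteq> (\<lambda>_. 0)"
  shows "\<exists>\<delta> k. \<delta> \<in> DF n f \<and> \<delta> \<noteq> (\<lambda>_. 0) \<and> \<theta> = (\<lambda>i. var n ^ k * der_homog n \<delta> i)"
proof -
  let ?F = "homog n f"
  define \<delta> where "\<delta> = (\<lambda>i. dh n (\<theta> i))"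
  have tD: "\<theta> \<in> Der (Suc n)" using th by (simp add: DF_def)
  have tP: "\<theta> i \<in> polys (Suc n)" for i using tD by (simp add: Der_def)
  have t0: "n \<le> i \<Longrightarrow> \<theta> i = 0" for i using tD th(2) by (cases "i = n") (auto simp: Der_def)
  have dD: "\<delta> \<in> Der n" unfolding \<delta>_def Der_def using tP t0 dh_polys by auto
  have nz_iff: "\<delta> i = 0 \<longleftrightarrow> \<theta> i = 0" for i unfolding \<delta>_def using dh_hom_nz[OF hd] by auto
  have dnz: "\<delta> \<noteq> (\<lambda>_. 0)" using nz nz_iff by auto
  have dF: "\<delta> \<in> Dge n q (mult_in n q f)" if q: "irreducible_in n q" "dvd_in n q f" for q
  proof -
    define e where "e = mult_in n q f"
    define p where "p = homog n q"
    have pirr: "irreducible_in (Suc n) p" unfolding p_def by (rule irr_homog[OF q(1)])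
    have qP: "q \<in> polys n" "q \<noteq> 0" using q by (auto simp: irreducible_in_def)
    obtain r where r: "r \<in> polys n" "f = q ^ e * r" using mult_dvd[OF q(1) f] unfolding e_def dvd_in_def by blast
    have r0: "r \<noteq> 0" using r f by auto
    have qe: "q ^ e \<in> polys n" "q ^ e \<noteq> 0" using qP polys_power by auto
    have "?F = p ^ e * homog n r"
      using r homog_mult[OF qe(1) r(1) qe(2) r0] homog_power[OF qP] p_def by simp
    then have pe: "dvd_in (Suc n) (p ^ e) ?F" using homog_polys r by (auto simp: dvd_in_def)
    obtain r1 where r1: "r1 \<in> polys n" "f = q * r1" using q(2) by (auto simp: dvd_in_def)
    have r10: "r1 \<noteq> 0" using r1 f by auto
    have "?F = p * homog n r1" using r1 homog_mult[OF qP(1) r1(1) qP(2) r10] p_def by simp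
    then have pd: "dvd_in (Suc n) p ?F" using homog_polys r1 by (auto simp: dvd_in_def)
    define e' where "e' = mult_in (Suc n) p ?F"
    have ee: "e \<le> e'" unfolding e'_def using mult_ge[OF pirr homog_nz[OF f] pe] .
    have "\<theta> \<in> Dge (Suc n) p e'" using th(1) pirr pd unfolding DF_def e'_def by blast
    then obtain s where s: "s \<in> polys (Suc n)" "der_apply (Suc n) \<theta> p = p ^ e' * s"
      by (auto simp: Dge_def dvd_in_def)
    have dp: "dh n p = q" unfolding p_def using dh_homog[OF qP(1)] .
    have "der_apply n \<delta> q = dh n (der_apply (Suc n) \<theta> p)"
      unfolding \<delta>_def dh_der[of \<theta> n, OF th(2)] dp ..
    also have "\<dots> = q ^ e' * dh n s" using s dp by (simp add: dh_mult dh_power)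
    also have "\<dots> = q ^ e * (q ^ (e' - e) * dh n s)"
      using ee power_add[of q e "e' - e"] by (simp add: mult.assoc)
    finally have "dvd_in n (q ^ e) (der_apply n \<delta> q)"
      unfolding dvd_in_def using dh_polys[OF s(1)] qP polys_power polys_mult by blast
    then show ?thesis using dD by (simp add: Dge_def e_def)
  qed
  have dDF: "\<delta> \<in> DF n f" using dD dF unfolding DF_def by blast
  obtain j where j: "j < n" "\<delta> j \<noteq> 0" "Emax n \<delta> = tdeg (\<delta> j)" using Emax_attained[OF dD dnz] by blast
  have Ed: "Emax n \<delta> \<le> d" using j tdeg_dh_le[OF hd, of j] nz_iff unfolding \<delta>_def by auto
  have "\<theta> = (\<lambda>i. var n ^ (d - Emax n \<delta>) * der_homog n \<delta> i)"
  proof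
    fix i
    show "\<theta> i = var n ^ (d - Emax n \<delta>) * der_homog n \<delta> i"
    proof (cases "\<delta> i = 0")
      case True
      then show ?thesis using nz_iff by (simp add: der_homog_eq)
    next
      case False
      then have ti: "\<theta> i \<noteq> 0" using nz_iff by auto
      have "i < n" using False dD by (metis (mono_tags, lifting) Der_def mem_Collect_eq not_le)
      then have le: "tdeg (\<delta> i) \<le> Emax n \<delta>" using Emax_ge False by blast
      have "\<theta> i = var n ^ (d - tdeg (\<delta> i)) * homog n (\<delta> i)"
        unfolding \<delta>_def by (rule char[OF tP hd ti])
      also have "\<dots> = var n ^ (d - Emax n \<delta>) * (var n ^ (Emax n \<delta> - tdeg (\<delta> i)) * homog n (\<delta> i))"
        using le Ed by (simp add: mult.assoc power_add[symmetric])
      finally show ?thesis using False by (simp add: der_homog_eq)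
    qed
  qed
  then show ?thesis using dDF dnz by blast
qed



theorem mainTheorem13:
  fixes n :: nat and f :: "'k::field_char_0 mpoly"
  assumes "f \<in> polys n" and "f \<noteq> 0"
  shows "DF (Suc n) (homog n f) \<inter> {a \<in> Der (Suc n). a n = 0}
         = submod_gen (polys (Suc n)) (der_homog n ` {a \<in> DF n f. a \<noteq> (\<lambda>_. 0)})"
proof
  let ?F = "homog n f"
  let ?Gs = "der_homog n ` {a \<in> DF n f. a \<noteq> (\<lambda>_. 0)}"
  show "submod_gen (polys (Suc n)) ?Gs \<subseteq> DF (Suc n) ?F \<inter> {a \<in> Der (Suc n). a n = 0}"
  proof
    fix x assume "x \<in> submod_gen (polys (Suc n)) ?Gs"
    then show "x \<in> DF (Suc n) ?F \<inter> {a \<in> Der (Suc n). a n = 0}"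
    proof (induction rule: submod_gen.induct)
      case zero
      then show ?case using DF_zero[of "Suc n" "homog n f"] Der_zero[of "Suc n"] by simp
    next
      case (add c v w)
      obtain \<delta> where d: "\<delta> \<in> DF n f" "\<delta> \<noteq> (\<lambda>_. 0)" "v = der_homog n \<delta>" using add(2) by blast
      have dD: "\<delta> \<in> Der n" using d(1) by (simp add: DF_def)
      have v: "v \<in> DF (Suc n) ?F" "v n = 0" "v \<in> Der (Suc n)"
        using gen_in[OF assms d(1,2)] der_homog_props[OF dD d(2)] d(3) by auto
      have w: "w \<in> DF (Suc n) ?F" "w \<in> Der (Suc n)" "w n = 0" using add.IH by auto
      have "(\<lambda>i. c * v i + w i) \<in> DF (Suc n) ?F" using DF_closed[OF add.hyps(1) v(1) w(1)] .
      moreover have "(\<lambda>i. c * v i + w i) \<in> Der (Suc n)" using Der_closed[OF add.hyps(1) v(3) w(2)] .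
      moreover have "c * v n + w n = 0" using v(2) w(3) by simp
      ultimately show ?case by simp
    qed
  qed
  show "DF (Suc n) ?F \<inter> {a \<in> Der (Suc n). a n = 0} \<subseteq> submod_gen (polys (Suc n)) ?Gs"
  proof
    fix \<theta> assume th: "\<theta> \<in> DF (Suc n) ?F \<inter> {a \<in> Der (Suc n). a n = 0}"
    then have thF: "\<theta> \<in> DF (Suc n) ?F" and tn: "\<theta> n = 0" and tD: "\<theta> \<in> Der (Suc n)" by auto
    define S where "S = (\<Union>i\<in>{..<Suc n}. mdeg ` Poly_Mapping.keys (\<theta> i))"
    have fS: "finite S" unfolding S_def by auto
    have eq: "\<theta> = (\<lambda>i. \<Sum>d\<in>S. hc d (\<theta> i))"
    proof
      fix i
      show "\<theta> i = (\<Sum>d\<in>S. hc d (\<theta> i))"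
      proof (cases "i < Suc n")
        case True
        show ?thesis by (rule decomp[OF fS]) (use True in \<open>auto simp: S_def\<close>)
      next
        case False
        then have "\<theta> i = 0" using tD by (simp add: Der_def)
        then show ?thesis by simp
      qed
    qed
    have "A \<subseteq> S \<Longrightarrow> (\<lambda>i. \<Sum>d\<in>A. hc d (\<theta> i)) \<in> submod_gen (polys (Suc n)) ?Gs" for A
    proof (induction A rule: infinite_finite_induct)
      case (infinite A)
      then show ?case using fS finite_subset by blast
    next
      case empty
      then show ?case using submod_gen.zero by simp
    next
      case (insert d A)
      then have IH: "(\<lambda>i. \<Sum>d\<in>A. hc d (\<theta> i)) \<in> submod_gen (polys (Suc n)) ?Gs" by simp
      have eqs: "(\<lambda>i. \<Sum>d\<in>insert d A. hc d (\<theta> i)) = (\<lambda>i. hc d (\<theta> i) + (\<Sum>d\<in>A. hc d (\<theta> i)))"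
        using insert(1,2) by simp
      show ?case
      proof (cases "(\<lambda>i. hc d (\<theta> i)) = (\<lambda>_. 0)")
        case True
        then have "\<And>i. hc d (\<theta> i) = 0" by metis
        then show ?thesis using IH eqs by simp
      next
        case False
        have c1: "(\<lambda>i. hc d (\<theta> i)) \<in> DF (Suc n) ?F" by (rule comp_in[OF assms thF])
        obtain \<delta> k where dk: "\<delta> \<in> DF n f" "\<delta> \<noteq> (\<lambda>_. 0)" "(\<lambda>i. hc d (\<theta> i)) = (\<lambda>i. var n ^ k * der_homog n \<delta> i)"
        proof -
          have hn: "hc d (\<theta> n) = 0" using tn by simp
          show ?thesis using comp_gen[OF assms c1 hn hom_hc False] that by blast
        qed
        have "(\<lambda>i. var n ^ k * der_homog n \<delta> i + (\<Sum>d\<in>A. hc d (\<theta> i))) \<in> submod_gen (polys (Suc n)) ?Gs"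
          by (rule submod_gen.add[OF _ _ IH]) (use dk in \<open>auto intro: polys_power polys_var\<close>)
        moreover have "\<And>i. hc d (\<theta> i) = var n ^ k * der_homog n \<delta> i" using dk(3) by metis
        ultimately show ?thesis unfolding eqs by simp
      qed
    qed
    then have X: "(\<lambda>i. \<Sum>d\<in>S. hc d (\<theta> i)) \<in> submod_gen (polys (Suc n)) ?Gs" by blast
    show "\<theta> \<in> submod_gen (polys (Suc n)) ?Gs" by (subst eq) (rule X)
  qed
qed


end
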